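(* Let $d\ge1$, let $\nu:\mathbb J\to\mathbb N_+$ be monotonically increasing and $p:\mathbb J\to(0,1)$ strictly decreasing with $\sum_{j\in\mathbb J}p_j=1$. Let $(j^{(t)})_{t\ge1}$ be an efficiency-nonincreasing enumeration of $\mathbb J$ and $I_{(t)}:=\{j^{(1)},\dots,j^{(t)}\}$. Then for every $t\ge1$, $I_{(t)}$ is a solution of Problem 3 with $P=p(I_{(t)})$.
   Context: $\mathbb J:=\mathbb N^d$ with $\mathbb N=\{0,1,2,\dots\}$, partially ordered componentwise ($i\le j$ iff $i_h\le j_h$ for all $h$; $i<j$ iff $i\le j$, $i\neq j$). For $I\subseteq\mathbb J$, $\operatorname{\downarrow} I:=\{j: j\le i\text{ for some } i\in I\}$. $\nu(I):=\sum_{j\in I}\nu_j$, $p(I):=\sum_{j\in I}p_j$, efficiency $r_j:=p_j/\nu_j$. Strictly decreasing: $i<j\Rightarrow f_i>f_j$; monotonically increasing: $i<j\Rightarrow f_i\le f_j$. An efficiency-nonincreasing enumeration of $\mathbb J$ is a bijection $t\mapsto j^{(t)}$ from $\mathbb N_+$ onto $\mathbb J$ with $r_{j^{(t)}}\ge r_{j^{(t+1)}}$ for all $t$. Problem 3 (for given $P\in(0,1)$): minimize $\nu(I)$ over $I\subseteq\mathbb J$ subject to $I=\operatorname{\downarrow} I$ and $p(I)\ge P$. *)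

theory Defs
  imports "HOL-Analysis.Analysis"
begin

text \<open>The index set J = N^d is rendered as the function type 'd \<Rightarrow> nat for a finite
  (hence nonempty, so d \<ge> 1) index type 'd. The componentwise order is the pointwise
  order on functions (le_fun); strict order i < j means i \<le> j and i \<noteq> j.\<close>

definition down_closure :: "('d \<Rightarrow> nat) set \<Rightarrow> ('d \<Rightarrow> nat) set" where
  "down_closure I = {j. \<exists>i\<in>I. j \<le> i}"

text \<open>nu(I) as an extended nonnegative sum (infinite for infinite I since nu \<ge> 1).\<close>
definition nu_set :: "(('d \<Rightarrow> nat) \<Rightarrow> nat) \<Rightarrow> ('d \<Rightarrow> nat) set \<Rightarrow> ennreal" where
  "nu_set \<nu> I = infsum (\<lambda>j. ennreal (real (\<nu> j))) I"

definition p_set :: "(('d \<Rightarrow> nat) \<Rightarrow> real) \<Rightarrow> ('d \<Rightarrow> nat) set \<Rightarrow> real" where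
  "p_set p I = infsum p I"

definition efficiency :: "(('d \<Rightarrow> nat) \<Rightarrow> nat) \<Rightarrow> (('d \<Rightarrow> nat) \<Rightarrow> real) \<Rightarrow> ('d \<Rightarrow> nat) \<Rightarrow> real" where
  "efficiency \<nu> p j = p j / real (\<nu> j)"

definition eff_nonincr_enum ::
  "(('d \<Rightarrow> nat) \<Rightarrow> nat) \<Rightarrow> (('d \<Rightarrow> nat) \<Rightarrow> real) \<Rightarrow> (nat \<Rightarrow> ('d \<Rightarrow> nat)) \<Rightarrow> bool" where
  "eff_nonincr_enum \<nu> p e \<longleftrightarrow> bij_betw e {1..} UNIV \<and>
     (\<forall>t\<ge>1. efficiency \<nu> p (e t) \<ge> efficiency \<nu> p (e (Suc t)))"

definition solves_problem3 ::
  "(('d \<Rightarrow> nat) \<Rightarrow> nat) \<Rightarrow> (('d \<Rightarrow> nat) \<Rightarrow> real) \<Rightarrow> real \<Rightarrow> ('d \<Rightarrow> nat) set \<Rightarrow> bool" where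
  "solves_problem3 \<nu> p P I \<longleftrightarrow>
     I = down_closure I \<and> p_set p I \<ge> P \<and>
     (\<forall>I'. I' = down_closure I' \<and> p_set p I' \<ge> P \<longrightarrow> nu_set \<nu> I \<le> nu_set \<nu> I')"

end

theory Submission
  imports Defs
begin

lemma eff_chain:
  assumes "\<forall>t\<ge>1. (f::nat\<Rightarrow>real) t \<ge> f (Suc t)" "1 \<le> a" "a \<le> b"
  shows "f b \<le> f a"
  using assms(3)
proof (induction b rule: dec_induct)
  case base then show ?case by simp
next
  case (step n)
  then show ?case using assms(1,2) by (meson order_trans)
qed

theorem corollary1:
  fixes \<nu> :: "('d::finite \<Rightarrow> nat) \<Rightarrow> nat"
    and p :: "('d \<Rightarrow> nat) \<Rightarrow> real"
    and e :: "nat \<Rightarrow> ('d \<Rightarrow> nat)"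
    and t :: nat
  assumes nu_pos: "\<And>j. \<nu> j > 0"
    and nu_mono: "\<And>i j. i < j \<Longrightarrow> \<nu> i \<le> \<nu> j"
    and p_range: "\<And>j. 0 < p j \<and> p j < 1"
    and p_decr: "\<And>i j. i < j \<Longrightarrow> p i > p j"
    and p_sum: "(p has_sum 1) UNIV"
    and enum: "eff_nonincr_enum \<nu> p e"
    and t: "t \<ge> 1"
  shows "solves_problem3 \<nu> p (p_set p (e ` {1..t})) (e ` {1..t})"
proof -
  define T where "T = e ` {1..t}"
  define r where "r = efficiency \<nu> p"
  have bij: "bij_betw e {1..} UNIV" and ch: "\<forall>t\<ge>1. r (e t) \<ge> r (e (Suc t))"
    using enum unfolding eff_nonincr_enum_def r_def by auto
  have chain: "\<And>a b. 1 \<le> a \<Longrightarrow> a \<le> b \<Longrightarrow> r (e b) \<le> r (e a)"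
    using eff_chain[of "\<lambda>s. r (e s)"] ch by blast
  have surj: "\<And>j. \<exists>s\<ge>1. e s = j" proof -
    fix j
    have "j \<in> e ` {1..}" using bij unfolding bij_betw_def by auto
    then show "\<exists>s\<ge>1. e s = j" by auto
  qed
  have finT: "finite T" unfolding T_def by simp
  have rstrict: "r i > r j" if "i < j" for i j
  proof -
    have "p i / real (\<nu> j) > p j / real (\<nu> j)"
      using p_decr[OF that] nu_pos[of j] by (simp add: divide_strict_right_mono)
    moreover have "p i / real (\<nu> i) \<ge> p i / real (\<nu> j)"
      using nu_mono[OF that] nu_pos[of i] p_range[of i]
      by (simp add: frac_le)
    ultimately show ?thesis unfolding r_def efficiency_def by linarith
  qed
  define c where "c = r (e t)"
  have cpos: "c > 0" unfolding c_def r_def efficiency_def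
    using nu_pos p_range by simp
  have inT: "p j \<ge> c * \<nu> j" if jT: "j \<in> T" for j
  proof -
    obtain s where s: "1 \<le> s" "s \<le> t" "j = e s" using jT unfolding T_def by auto
    have "c \<le> r j" using chain[OF s(1,2)] s(3) unfolding c_def by simp
    then show ?thesis unfolding r_def efficiency_def using nu_pos[of j]
      by (simp add: pos_le_divide_eq)
  qed
  have outT: "p j \<le> c * \<nu> j" if jT: "j \<notin> T" for j
  proof -
    obtain s where s: "1 \<le> s" "e s = j" using surj by blast
    have "s > t" using jT s unfolding T_def by (metis atLeastAtMost_iff image_eqI not_le)
    then have "r j \<le> c" using chain[OF t, of s] s unfolding c_def by simp
    then show ?thesis unfolding r_def efficiency_def using nu_pos[of j]
      by (simp add: pos_divide_le_eq)
  qed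
  have down: "T = down_closure T"
  proof
    show "T \<subseteq> down_closure T" unfolding down_closure_def by auto
  next
    show "down_closure T \<subseteq> T"
    proof
      fix j assume "j \<in> down_closure T"
      then obtain i where i: "i \<in> T" "j \<le> i" unfolding down_closure_def by auto
      show "j \<in> T"
      proof (cases "j = i")
        case True then show ?thesis using i by simp
      next
        case False
        then have lt: "j < i" using i by simp
        obtain s where s: "1 \<le> s" "s \<le> t" "i = e s" using i unfolding T_def by auto
        obtain s' where s': "1 \<le> s'" "e s' = j" using surj by blast
        have "s' \<le> s"
        proof (rule ccontr)
          assume "\<not> s' \<le> s"
          then have "r j \<le> r i" using chain[OF s(1), of s'] s s' by simp
          then show False using rstrict[OF lt] by simp
        qed
        then show ?thesis using s s' unfolding T_def by auto
      qed
    qed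
  qed
  have opt: "nu_set \<nu> T \<le> nu_set \<nu> I'" if hI: "p_set p I' \<ge> p_set p T" for I'
  proof (cases "finite I'")
    case False
    have "nu_set \<nu> I' = \<infinity>" unfolding nu_set_def
      by (rule infsum_superconst_infinite_ennreal[where b=1]) (use nu_pos False in \<open>auto simp: Suc_le_eq\<close>)
    then show ?thesis by simp
  next
    case True
    have d1: "I' - I' \<inter> T = I' - T" and d2: "T - I' \<inter> T = T - I'" by blast+
    have pI: "sum p T \<le> sum p I'" using hI True finT unfolding p_set_def by simp
    have e1: "sum p I' = sum p (I' - T) + sum p (I' \<inter> T)"
      using sum.subset_diff[of "I' \<inter> T" I'] True d1 by simp
    have e2: "sum p T = sum p (T - I') + sum p (I' \<inter> T)"
      using sum.subset_diff[of "I' \<inter> T" T] finT d2 by simp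
    have a: "c * (\<Sum>j\<in>T - I'. real (\<nu> j)) \<le> sum p (T - I')"
      unfolding sum_distrib_left by (rule sum_mono) (use inT in auto)
    have b: "sum p (I' - T) \<le> c * (\<Sum>j\<in>I' - T. real (\<nu> j))"
      unfolding sum_distrib_left by (rule sum_mono) (use outT in auto)
    have "c * (\<Sum>j\<in>T - I'. real (\<nu> j)) \<le> c * (\<Sum>j\<in>I' - T. real (\<nu> j))"
      using a b pI e1 e2 by linarith
    then have le: "(\<Sum>j\<in>T - I'. real (\<nu> j)) \<le> (\<Sum>j\<in>I' - T. real (\<nu> j))"
      using cpos by simp
    have f1: "(\<Sum>j\<in>I'. real (\<nu> j)) = (\<Sum>j\<in>I' - T. real (\<nu> j)) + (\<Sum>j\<in>I' \<inter> T. real (\<nu> j))"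
      using sum.subset_diff[of "I' \<inter> T" I'] True d1 by simp
    have f2: "(\<Sum>j\<in>T. real (\<nu> j)) = (\<Sum>j\<in>T - I'. real (\<nu> j)) + (\<Sum>j\<in>I' \<inter> T. real (\<nu> j))"
      using sum.subset_diff[of "I' \<inter> T" T] finT d2 by simp
    have "(\<Sum>j\<in>T. real (\<nu> j)) \<le> (\<Sum>j\<in>I'. real (\<nu> j))" using le f1 f2 by linarith
    then have "(\<Sum>j\<in>T. ennreal (real (\<nu> j))) \<le> (\<Sum>j\<in>I'. ennreal (real (\<nu> j)))"
      by (subst (1 2) sum_ennreal) (auto intro: ennreal_leI)
    then show ?thesis unfolding nu_set_def using True finT by simp
  qed
  show ?thesis unfolding solves_problem3_def T_def[symmetric]
    using down opt by auto
qed

end
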